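(* Let $P$ and $Q$ be irreducible transition matrices on the finite set $S$, both reversible with respect to $\pi$, whose eigenvalues (counting multiplicity) are identical, and suppose $P\ne Q$. Then $P$ does not efficiency-dominate $Q$, and $Q$ does not efficiency-dominate $P$.
   Context: $S$ is a finite set, and $\pi$ is a probability distribution on $S$ with $\pi(x)>0$ for all $x$. A transition matrix $P$ is reversible with respect to $\pi$ if $\pi(x)P(x,y)=\pi(y)P(y,x)$ for all $x,y$; irreducible if every state can be reached from every other with positive probability in some number of steps. For a Markov chain $X_1,X_2,\dots$ with transition matrix $P$ and $X_1\sim\pi$, $v(f,P)=\lim_{N\to\infty}\frac1N\mathrm{Var}\big(\sum_{i=1}^N f(X_i)\big)$. $P$ efficiency-dominates $Q$ if $v(f,P)\le v(f,Q)$ for all $f:S\to\mathbb R$. *)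

theory Defs
  imports "Jordan_Normal_Form.Char_Poly"
begin

text \<open>The finite state space S is represented as {0..<n}; transition matrices are
  real n x n matrices (Jordan_Normal_Form), a distribution is a function nat => real.\<close>

definition prob_dist :: "nat \<Rightarrow> (nat \<Rightarrow> real) \<Rightarrow> bool" where
  "prob_dist n \<pi> \<longleftrightarrow> (\<forall>x<n. \<pi> x > 0) \<and> (\<Sum>x<n. \<pi> x) = 1"

definition transition_mat :: "nat \<Rightarrow> real mat \<Rightarrow> bool" where
  "transition_mat n P \<longleftrightarrow> P \<in> carrier_mat n n \<and>
     (\<forall>x<n. \<forall>y<n. P $$ (x, y) \<ge> 0) \<and> (\<forall>x<n. (\<Sum>y<n. P $$ (x, y)) = 1)"

definition reversible :: "nat \<Rightarrow> (nat \<Rightarrow> real) \<Rightarrow> real mat \<Rightarrow> bool" where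
  "reversible n \<pi> P \<longleftrightarrow> (\<forall>x<n. \<forall>y<n. \<pi> x * P $$ (x, y) = \<pi> y * P $$ (y, x))"

definition irreducible_mc :: "nat \<Rightarrow> real mat \<Rightarrow> bool" where
  "irreducible_mc n P \<longleftrightarrow> (\<forall>x<n. \<forall>y<n. \<exists>k. (P ^\<^sub>m k) $$ (x, y) > 0)"

text \<open>Law of X_i (i \<ge> 1) for the chain started with X_1 ~ \<pi>.\<close>
definition marg :: "nat \<Rightarrow> (nat \<Rightarrow> real) \<Rightarrow> real mat \<Rightarrow> nat \<Rightarrow> nat \<Rightarrow> real" where
  "marg n \<pi> P i x = (\<Sum>z<n. \<pi> z * (P ^\<^sub>m (i - 1)) $$ (z, x))"

text \<open>Joint law of (X_i, X_j).\<close>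
definition joint :: "nat \<Rightarrow> (nat \<Rightarrow> real) \<Rightarrow> real mat \<Rightarrow> nat \<Rightarrow> nat \<Rightarrow> nat \<Rightarrow> nat \<Rightarrow> real" where
  "joint n \<pi> P i j x y =
     (if i \<le> j then marg n \<pi> P i x * (P ^\<^sub>m (j - i)) $$ (x, y)
      else marg n \<pi> P j y * (P ^\<^sub>m (i - j)) $$ (y, x))"

text \<open>Var(\<Sum>_{i=1}^N f(X_i)) = \<Sum>_{i,j} Cov(f(X_i), f(X_j)).\<close>
definition var_sum :: "nat \<Rightarrow> (nat \<Rightarrow> real) \<Rightarrow> real mat \<Rightarrow> (nat \<Rightarrow> real) \<Rightarrow> nat \<Rightarrow> real" where
  "var_sum n \<pi> P f N =
     (\<Sum>i\<in>{1..N}. \<Sum>j\<in>{1..N}.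
        (\<Sum>x<n. \<Sum>y<n. joint n \<pi> P i j x y * f x * f y)
        - (\<Sum>x<n. marg n \<pi> P i x * f x) * (\<Sum>y<n. marg n \<pi> P j y * f y))"

definition asymp_var :: "nat \<Rightarrow> (nat \<Rightarrow> real) \<Rightarrow> real mat \<Rightarrow> (nat \<Rightarrow> real) \<Rightarrow> real" where
  "asymp_var n \<pi> P f = lim (\<lambda>N. var_sum n \<pi> P f N / real N)"

definition efficiency_dominates :: "nat \<Rightarrow> (nat \<Rightarrow> real) \<Rightarrow> real mat \<Rightarrow> real mat \<Rightarrow> bool" where
  "efficiency_dominates n \<pi> P Q \<longleftrightarrow> (\<forall>f. asymp_var n \<pi> P f \<le> asymp_var n \<pi> Q f)"

end

theory Submission
  imports Defs
begin


lemma coeff_prod_linear: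
  fixes a :: "nat \<Rightarrow> 'a::comm_ring_1"
  shows "coeff (\<Prod>i<Suc m. [:- a i, 1:]) (Suc m) = 1 \<and>
         coeff (\<Prod>i<Suc m. [:- a i, 1:]) m = - (\<Sum>i<Suc m. a i)"
proof (induction m)
  case 0
  then show ?case by simp
next
  case (Suc m)
  let ?q = "\<Prod>i<Suc m. [:- a i, 1:]"
  have e: "(\<Prod>i<Suc (Suc m). [:- a i, 1:]) = [:- a (Suc m), 1:] * ?q"
    by (simp add: mult.commute)
  have d: "degree ?q \<le> Suc m"
    by (rule order.trans[OF degree_prod_sum_le]) auto
  have c2: "coeff ?q (Suc (Suc m)) = 0" using d by (intro coeff_eq_0) auto
  show ?case unfolding e using Suc c2 by (simp add: mult_pCons_left)
qed

lemma coeff_char_poly_trace: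
  fixes A :: "'a::comm_ring_1 mat"
  assumes A: "A \<in> carrier_mat n n" and n: "n > 0"
  shows "coeff (char_poly A) (n - 1) = - (\<Sum>i<n. A $$ (i,i))"
proof -
  let ?M = "[:0, 1:] \<cdot>\<^sub>m 1\<^sub>m (dim_row A) + map_mat (\<lambda>a. [:- a:]) A"
  from A have A': "?M \<in> carrier_mat n n" by auto
  have Mij: "?M $$ (i,j) = (if i = j then [:- A $$ (i,i), 1:] else [:- A $$ (i,j):])" if "i < n" "j < n" for i j
    using A that by auto
  let ?S = "{p. p permutes {0..<n}}"
  let ?t = "\<lambda>p. signof p * (\<Prod>i = 0..<n. ?M $$ (i, p i))"
  have fin: "finite ?S" by (simp add: finite_permutations)
  have idS: "id \<in> ?S" by (simp add: permutes_id)
  have z: "coeff (?t p) (n - 1) = 0" if "p \<in> ?S - {id}" for p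
  proof -
    from that have p: "p permutes {0..<n}" and pid: "p \<noteq> id" by auto
    then obtain i where i: "i < n" and pi: "p i \<noteq> i"
      by (metis atLeastLessThan_iff order_refl permutes_natset_le)
    have pin: "p i < n" using permutes_in_image[OF p, of i] i by auto
    have ppi: "p (p i) \<noteq> p i" using pi p by (metis permutes_inj injD)
    have "degree (\<Prod>i = 0..<n. ?M $$ (i, p i)) \<le> (\<Sum>j = 0..<n. degree (?M $$ (j, p j)))"
      by (rule order.trans[OF degree_prod_sum_le]) auto
    also have "\<dots> \<le> (\<Sum>j = 0..<n. if p j = j then 1 else 0)"
    proof (rule sum_mono)
      fix j assume "j \<in> {0..<n}"
      then have "j < n" "p j < n" using p by (auto simp: permutes_in_image)
      then show "degree (?M $$ (j, p j)) \<le> (if p j = j then 1 else 0)"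
        using Mij by auto
    qed
    also have "\<dots> = card {j\<in>{0..<n}. p j = j}"
      by (simp add: sum.If_cases Int_def conj_commute)
    also have "\<dots> \<le> card ({0..<n} - {i, p i})"
      by (rule card_mono) (use pi ppi in auto)
    also have "\<dots> = n - 2" using i pin pi by (simp add: card_Diff_subset)
    finally have "degree (\<Prod>i = 0..<n. ?M $$ (i, p i)) \<le> n - 2" .
    moreover have "n \<ge> 2" using i pin pi by linarith
    ultimately show ?thesis by (intro coeff_eq_0) simp
  qed
  have "coeff (char_poly A) (n - 1) = (\<Sum>p\<in>?S. coeff (?t p) (n - 1))"
    unfolding char_poly_defs det_def'[OF A'] by (simp add: coeff_sum)
  also have "\<dots> = coeff (?t id) (n - 1) + (\<Sum>p\<in>?S - {id}. coeff (?t p) (n - 1))"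
    by (rule sum.remove[OF fin idS])
  also have "\<dots> = coeff (?t id) (n - 1)" using z by simp
  also have "(\<Prod>i = 0..<n. ?M $$ (i, id i)) = (\<Prod>i<n. [:- A $$ (i,i), 1:])"
    using Mij by (auto simp: atLeast0LessThan intro!: prod.cong)
  also have "coeff (signof id * (\<Prod>i<n. [:- A $$ (i,i), 1:])) (n - 1) = - (\<Sum>i<n. A $$ (i,i))"
  proof -
    obtain m where m: "n = Suc m" using n by (cases n) auto
    show ?thesis using coeff_prod_linear[of "\<lambda>i. A $$ (i,i)" m] unfolding m by simp
  qed
  finally show ?thesis .
qed



definition ip :: "nat \<Rightarrow> (nat\<Rightarrow>real) \<Rightarrow> (nat\<Rightarrow>real) \<Rightarrow> (nat\<Rightarrow>real) \<Rightarrow> real" where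
  "ip n \<pi> u v = (\<Sum>x<n. \<pi> x * u x * v x)"
definition ap :: "nat \<Rightarrow> real mat \<Rightarrow> (nat\<Rightarrow>real) \<Rightarrow> nat \<Rightarrow> real" where
  "ap n M u x = (\<Sum>y<n. M $$ (x,y) * u y)"

lemma mult_entry:
  assumes "A \<in> carrier_mat n n" "B \<in> carrier_mat n n" "i < n" "j < n"
  shows "(A * B) $$ (i,j) = (\<Sum>k<n. A $$ (i,k) * B $$ (k,j))"
  using assms by (simp add: scalar_prod_def atLeast0LessThan)

lemma transition_pow:
  assumes P: "transition_mat n P"
  shows "transition_mat n (P ^\<^sub>m k)"
proof (induction k)
  case 0
  have c: "P \<in> carrier_mat n n" using P unfolding transition_mat_def by auto
  then show ?case unfolding transition_mat_def by (auto simp: sum.delta)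
next
  case (Suc k)
  have c: "P \<in> carrier_mat n n" using P unfolding transition_mat_def by auto
  have ck: "P ^\<^sub>m k \<in> carrier_mat n n" using c by simp
  have nn: "(P ^\<^sub>m Suc k) $$ (x,y) \<ge> 0" if "x<n" "y<n" for x y
    using Suc P that unfolding transition_mat_def
    by (auto simp add: mult_entry[OF ck c] intro!: sum_nonneg mult_nonneg_nonneg)
  have rs: "(\<Sum>y<n. (P ^\<^sub>m Suc k) $$ (x,y)) = 1" if "x<n" for x
  proof -
    have "(\<Sum>y<n. (P ^\<^sub>m Suc k) $$ (x,y)) = (\<Sum>y<n. \<Sum>z<n. (P ^\<^sub>m k) $$ (x,z) * P $$ (z,y))"
      using that by (simp add: mult_entry[OF ck c])
    also have "\<dots> = (\<Sum>z<n. (P ^\<^sub>m k) $$ (x,z) * (\<Sum>y<n. P $$ (z,y)))"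
      by (subst sum.swap) (simp add: sum_distrib_left)
    also have "\<dots> = (\<Sum>z<n. (P ^\<^sub>m k) $$ (x,z))"
      using P unfolding transition_mat_def by simp
    also have "\<dots> = 1" using Suc that unfolding transition_mat_def by simp
    finally show ?thesis .
  qed
  have "P ^\<^sub>m Suc k \<in> carrier_mat n n" using c by (rule pow_carrier_mat)
  then show ?case using nn rs unfolding transition_mat_def by blast
qed

lemma ap_pow_Suc:
  assumes c: "P \<in> carrier_mat n n" and x: "x < n"
  shows "ap n (P ^\<^sub>m Suc k) u x = ap n (P ^\<^sub>m k) (ap n P u) x"
proof -
  have ck: "P ^\<^sub>m k \<in> carrier_mat n n" using c by simp
  have "ap n (P ^\<^sub>m Suc k) u x = (\<Sum>y<n. \<Sum>z<n. (P ^\<^sub>m k) $$ (x,z) * P $$ (z,y) * u y)"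
    unfolding ap_def using x by (simp add: mult_entry[OF ck c] sum_distrib_right)
  also have "\<dots> = ap n (P ^\<^sub>m k) (ap n P u) x"
    unfolding ap_def by (subst sum.swap) (simp add: sum_distrib_left mult.assoc)
  finally show ?thesis .
qed

lemma stationary:
  assumes P: "transition_mat n P" and R: "reversible n \<pi> P" and y: "y < n"
  shows "(\<Sum>x<n. \<pi> x * P $$ (x,y)) = \<pi> y"
proof -
  have "(\<Sum>x<n. \<pi> x * P $$ (x,y)) = (\<Sum>x<n. \<pi> y * P $$ (y,x))"
    using R y unfolding reversible_def by (intro sum.cong) auto
  also have "\<dots> = \<pi> y" using P y unfolding transition_mat_def by (simp add: sum_distrib_left[symmetric])
  finally show ?thesis .
qed

lemma stationary_pow:
  assumes P: "transition_mat n P" and R: "reversible n \<pi> P"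
  shows "y < n \<Longrightarrow> (\<Sum>x<n. \<pi> x * (P ^\<^sub>m k) $$ (x,y)) = \<pi> y"
proof (induction k arbitrary: y)
  case 0
  have c: "P \<in> carrier_mat n n" using P unfolding transition_mat_def by auto
  then show ?case using 0 by (simp add: if_distrib cong: if_cong)
next
  case (Suc k)
  have c: "P \<in> carrier_mat n n" using P unfolding transition_mat_def by auto
  have ck: "P ^\<^sub>m k \<in> carrier_mat n n" using c by simp
  have "(\<Sum>x<n. \<pi> x * (P ^\<^sub>m Suc k) $$ (x,y)) = (\<Sum>x<n. \<Sum>z<n. \<pi> x * (P ^\<^sub>m k) $$ (x,z) * P $$ (z,y))"
    using Suc.prems by (simp add: mult_entry[OF ck c] sum_distrib_left mult.assoc)
  also have "\<dots> = (\<Sum>z<n. (\<Sum>x<n. \<pi> x * (P ^\<^sub>m k) $$ (x,z)) * P $$ (z,y))"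
    by (subst sum.swap) (simp add: sum_distrib_right)
  also have "\<dots> = (\<Sum>z<n. \<pi> z * P $$ (z,y))"
    using Suc.IH by simp
  also have "\<dots> = \<pi> y" using stationary[OF P R Suc.prems] .
  finally show ?case .
qed

lemma marg_eq:
  assumes P: "transition_mat n P" and R: "reversible n \<pi> P" and x: "x < n"
  shows "marg n \<pi> P i x = \<pi> x"
  unfolding marg_def using stationary_pow[OF P R x] .

lemma self_adj:
  assumes R: "reversible n \<pi> P"
  shows "ip n \<pi> u (ap n P v) = ip n \<pi> (ap n P u) v"
proof -
  have "ip n \<pi> u (ap n P v) = (\<Sum>x<n. \<Sum>y<n. (\<pi> x * P $$ (x,y)) * u x * v y)"
    unfolding ip_def ap_def by (simp add: sum_distrib_left mult_ac)
  also have "\<dots> = (\<Sum>x<n. \<Sum>y<n. (\<pi> y * P $$ (y,x)) * u x * v y)"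
    using R unfolding reversible_def by (intro sum.cong) auto
  also have "\<dots> = ip n \<pi> (ap n P u) v"
    unfolding ip_def ap_def by (subst sum.swap) (simp add: sum_distrib_left sum_distrib_right mult_ac)
  finally show ?thesis .
qed

lemma dirichlet:
  assumes P: "transition_mat n P" and R: "reversible n \<pi> P" and pd: "prob_dist n \<pi>"
  shows "ip n \<pi> u (ap n P u) \<le> ip n \<pi> u u"
proof -
  have nn: "\<pi> x * P $$ (x,y) \<ge> 0" if "x<n" "y<n" for x y
    using P pd that unfolding transition_mat_def prob_dist_def by (simp add: less_imp_le)
  have "ip n \<pi> u (ap n P u) = (\<Sum>x<n. \<Sum>y<n. (\<pi> x * P $$ (x,y)) * (u x * u y))"
    unfolding ip_def ap_def by (simp add: sum_distrib_left mult_ac)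
  also have "\<dots> \<le> (\<Sum>x<n. \<Sum>y<n. (\<pi> x * P $$ (x,y)) * ((u x)^2 + (u y)^2) / 2)"
  proof (intro sum_mono)
    fix x y assume "x \<in> {..<n}" "y \<in> {..<n}"
    then have "\<pi> x * P $$ (x,y) \<ge> 0" using nn by auto
    moreover have "u x * u y \<le> ((u x)^2 + (u y)^2) / 2"
      using sum_squares_bound[of "u x" "u y"] by (simp add: power2_eq_square)
    ultimately show "(\<pi> x * P $$ (x,y)) * (u x * u y) \<le> (\<pi> x * P $$ (x,y)) * ((u x)^2 + (u y)^2) / 2"
      by (metis mult_left_mono times_divide_eq_right)
  qed
  also have "\<dots> = (\<Sum>x<n. \<Sum>y<n. (\<pi> x * P $$ (x,y)) * (u x)^2) / 2 + (\<Sum>x<n. \<Sum>y<n. (\<pi> x * P $$ (x,y)) * (u y)^2) / 2"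
    by (simp add: sum_divide_distrib sum.distrib distrib_left add_divide_distrib)
  also have "(\<Sum>x<n. \<Sum>y<n. (\<pi> x * P $$ (x,y)) * (u x)^2) = (\<Sum>x<n. \<pi> x * (u x)^2 * (\<Sum>y<n. P $$ (x,y)))"
    by (simp add: sum_distrib_left mult_ac)
  also have "\<dots> = ip n \<pi> u u"
    using P unfolding transition_mat_def ip_def by (simp add: power2_eq_square mult_ac)
  also have "(\<Sum>x<n. \<Sum>y<n. (\<pi> x * P $$ (x,y)) * (u y)^2) = (\<Sum>y<n. (\<Sum>x<n. \<pi> x * P $$ (x,y)) * (u y)^2)"
    by (subst sum.swap) (simp add: sum_distrib_right)
  also have "\<dots> = ip n \<pi> u u"
    using stationary[OF P R] unfolding ip_def by (simp add: power2_eq_square mult_ac)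
  finally show ?thesis by simp
qed


lemma ap_cong: "(\<And>y. y < n \<Longrightarrow> u y = v y) \<Longrightarrow> ap n M u x = ap n M v x"
  unfolding ap_def by (intro sum.cong) auto

lemma ap_one: assumes "x < n" shows "ap n (1\<^sub>m n) u x = u x"
proof -
  have "ap n (1\<^sub>m n) u x = (\<Sum>y<n. if x = y then u y else 0)"
    unfolding ap_def using assms by (intro sum.cong) auto
  then show ?thesis using assms by simp
qed

lemma ap_pow_Suc':
  assumes c: "P \<in> carrier_mat n n"
  shows "x < n \<Longrightarrow> ap n (P ^\<^sub>m Suc k) u x = ap n P (ap n (P ^\<^sub>m k) u) x"
proof (induction k arbitrary: u x)
  case 0
  have "ap n (P ^\<^sub>m Suc 0) u x = ap n (P ^\<^sub>m 0) (ap n P u) x" by (rule ap_pow_Suc[OF c 0])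
  also have "\<dots> = ap n P u x" using c 0 by (simp add: ap_one)
  also have "\<dots> = ap n P (ap n (P ^\<^sub>m 0) u) x" using c by (intro ap_cong) (simp add: ap_one)
  finally show ?case .
next
  case (Suc k)
  have "ap n (P ^\<^sub>m Suc (Suc k)) u x = ap n (P ^\<^sub>m Suc k) (ap n P u) x" by (rule ap_pow_Suc[OF c Suc.prems])
  also have "\<dots> = ap n P (ap n (P ^\<^sub>m k) (ap n P u)) x" by (rule Suc.IH[OF Suc.prems])
  also have "\<dots> = ap n P (ap n (P ^\<^sub>m Suc k) u) x"
    by (intro ap_cong) (metis ap_pow_Suc[OF c] pow_mat.simps(2))
  finally show ?case .
qed

lemma var_formula:
  assumes P: "transition_mat n P" and R: "reversible n \<pi> P" and pd: "prob_dist n \<pi>"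
    and fg: "\<And>x. x < n \<Longrightarrow> f x = g x - ap n P g x"
  shows "asymp_var n \<pi> P f = 2 * ip n \<pi> f g - ip n \<pi> f f"
proof -
  have c: "P \<in> carrier_mat n n" using P unfolding transition_mat_def by auto
  define \<gamma> where "\<gamma> k = ip n \<pi> f (ap n (P ^\<^sub>m k) f)" for k
  define a where "a k = ip n \<pi> f (ap n (P ^\<^sub>m k) g)" for k
  define b where "b k = ip n \<pi> g (ap n (P ^\<^sub>m k) g)" for k
  define G where "G i j = \<gamma> (if i \<le> j then j - i else i - j)" for i j :: nat
  have mean0: "(\<Sum>x<n. \<pi> x * f x) = 0"
  proof -
    have "(\<Sum>x<n. \<pi> x * f x) = (\<Sum>x<n. \<pi> x * g x) - (\<Sum>x<n. \<Sum>y<n. \<pi> x * P $$ (x,y) * g y)"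
      using fg by (simp add: ap_def right_diff_distrib sum_subtractf sum_distrib_left mult.assoc)
    also have "(\<Sum>x<n. \<Sum>y<n. \<pi> x * P $$ (x,y) * g y) = (\<Sum>y<n. (\<Sum>x<n. \<pi> x * P $$ (x,y)) * g y)"
      by (subst sum.swap) (simp add: sum_distrib_right)
    also have "\<dots> = (\<Sum>y<n. \<pi> y * g y)" using stationary[OF P R] by simp
    finally show ?thesis by simp
  qed
  have meanm: "(\<Sum>x<n. marg n \<pi> P i x * f x) = 0" for i
    using mean0 by (simp add: marg_eq[OF P R])
  have jt: "(\<Sum>x<n. \<Sum>y<n. joint n \<pi> P i j x y * f x * f y) = G i j" for i j
  proof (cases "i \<le> j")
    case True
    then show ?thesis unfolding G_def \<gamma>_def joint_def ip_def ap_def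
      by (simp add: marg_eq[OF P R] sum_distrib_left mult_ac)
  next
    case False
    have "(\<Sum>x<n. \<Sum>y<n. joint n \<pi> P i j x y * f x * f y) =
          (\<Sum>x<n. \<Sum>y<n. \<pi> y * (P ^\<^sub>m (i - j)) $$ (y, x) * f y * f x)"
      using False unfolding joint_def by (simp add: marg_eq[OF P R] mult_ac)
    also have "\<dots> = (\<Sum>y<n. \<Sum>x<n. \<pi> y * (P ^\<^sub>m (i - j)) $$ (y, x) * f y * f x)"
      by (rule sum.swap)
    also have "\<dots> = G i j" using False unfolding G_def \<gamma>_def ip_def ap_def
      by (simp add: sum_distrib_left mult_ac)
    finally show ?thesis .
  qed
  have vs: "var_sum n \<pi> P f N = (\<Sum>i\<in>{1..N}. \<Sum>j\<in>{1..N}. G i j)" for N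
    unfolding var_sum_def jt meanm by simp
  have ga: "\<gamma> k = a k - a (Suc k)" for k
  proof -
    have "ap n (P ^\<^sub>m k) f x = ap n (P ^\<^sub>m k) g x - ap n (P ^\<^sub>m Suc k) g x" if "x < n" for x
      using fg that unfolding ap_pow_Suc[OF c that] by (simp add: ap_def right_diff_distrib sum_subtractf)
    then show ?thesis unfolding \<gamma>_def a_def ip_def by (simp add: right_diff_distrib sum_subtractf)
  qed
  have ab: "a k = b k - b (Suc k)" for k
  proof -
    have "a k = ip n \<pi> g (ap n (P ^\<^sub>m k) g) - ip n \<pi> (ap n P g) (ap n (P ^\<^sub>m k) g)"
      unfolding a_def ip_def using fg by (simp add: left_diff_distrib right_diff_distrib sum_subtractf)
    also have "ip n \<pi> (ap n P g) (ap n (P ^\<^sub>m k) g) = ip n \<pi> g (ap n P (ap n (P ^\<^sub>m k) g))"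
      using self_adj[OF R] by simp
    also have "\<dots> = b (Suc k)" unfolding b_def ip_def using ap_pow_Suc'[OF c] by simp
    finally show ?thesis unfolding b_def .
  qed
  have tel: "(\<Sum>j\<in>{1..N}. \<gamma> (Suc N - j)) = a 1 - a (Suc N)" for N
  proof -
    have "(\<Sum>j\<in>{1..N}. \<gamma> (Suc N - j)) = (\<Sum>j\<in>{1..N}. \<gamma> j)"
      by (subst sum.atLeastAtMost_rev) (intro sum.cong, auto)
    also have "\<dots> = - (\<Sum>j\<in>{1..N}. a (Suc j) - a j)" unfolding ga by (simp add: sum_negf[symmetric])
    also have "\<dots> = a 1 - a (Suc N)" by (subst sum_Suc_diff) auto
    finally show ?thesis .
  qed
  have step: "(\<Sum>i\<in>{1..Suc N}. \<Sum>j\<in>{1..Suc N}. G i j) =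
      (\<Sum>i\<in>{1..N}. \<Sum>j\<in>{1..N}. G i j) + \<gamma> 0 + 2 * (a 1 - a (Suc N))" for N
  proof -
    have I: "{1..Suc N} = insert (Suc N) {1..N}" by auto
    have r1: "(\<Sum>j\<in>{1..N}. G (Suc N) j) = a 1 - a (Suc N)"
      unfolding tel[symmetric] G_def by (intro sum.cong) auto
    have r2: "(\<Sum>i\<in>{1..N}. G i (Suc N)) = a 1 - a (Suc N)"
      unfolding tel[symmetric] G_def by (intro sum.cong) auto
    have "(\<Sum>i\<in>{1..Suc N}. \<Sum>j\<in>{1..Suc N}. G i j) =
       (G (Suc N) (Suc N) + (\<Sum>j\<in>{1..N}. G (Suc N) j)) + (\<Sum>i\<in>{1..N}. G i (Suc N) + (\<Sum>j\<in>{1..N}. G i j))"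
      unfolding I by simp
    also have "\<dots> = (\<Sum>i\<in>{1..N}. \<Sum>j\<in>{1..N}. G i j) + \<gamma> 0 + 2 * (a 1 - a (Suc N))"
      using r1 r2 by (simp add: sum.distrib G_def)
    finally show ?thesis .
  qed
  define C where "C = \<gamma> 0 + 2 * a 1"
  have closed: "var_sum n \<pi> P f N = real N * C - 2 * (b 1 - b (Suc N))" for N
  proof (induction N)
    case 0
    then show ?case unfolding vs by simp
  next
    case (Suc N)
    then show ?case unfolding vs step C_def using ab[of "Suc N"] by (simp add: algebra_simps)
  qed
  define B where "B = (\<Sum>x<n. \<pi> x * \<bar>g x\<bar>) * (\<Sum>y<n. \<bar>g y\<bar>)"
  have bB: "\<bar>b m\<bar> \<le> B" for m
  proof -
    have Tm: "transition_mat n (P ^\<^sub>m m)" by (rule transition_pow[OF P])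
    have e1: "(P ^\<^sub>m m) $$ (x,y) \<le> 1" "(P ^\<^sub>m m) $$ (x,y) \<ge> 0" if "x<n" "y<n" for x y
    proof -
      show "(P ^\<^sub>m m) $$ (x,y) \<ge> 0" using Tm that unfolding transition_mat_def by auto
      have "(P ^\<^sub>m m) $$ (x,y) \<le> (\<Sum>z<n. (P ^\<^sub>m m) $$ (x,z))"
        by (rule member_le_sum) (use Tm that in \<open>auto simp: transition_mat_def\<close>)
      then show "(P ^\<^sub>m m) $$ (x,y) \<le> 1" using Tm that unfolding transition_mat_def by auto
    qed
    have apb: "\<bar>ap n (P ^\<^sub>m m) g x\<bar> \<le> (\<Sum>y<n. \<bar>g y\<bar>)" if "x<n" for x
    proof -
      have "\<bar>ap n (P ^\<^sub>m m) g x\<bar> \<le> (\<Sum>y<n. \<bar>(P ^\<^sub>m m) $$ (x,y) * g y\<bar>)"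
        unfolding ap_def by (rule sum_abs)
      also have "\<dots> \<le> (\<Sum>y<n. \<bar>g y\<bar>)"
      proof (rule sum_mono)
        fix y assume "y \<in> {..<n}"
        then show "\<bar>(P ^\<^sub>m m) $$ (x,y) * g y\<bar> \<le> \<bar>g y\<bar>"
          using e1[OF that, of y] by (simp add: abs_mult mult_left_le_one_le)
      qed
      finally show ?thesis .
    qed
    have "\<bar>b m\<bar> \<le> (\<Sum>x<n. \<bar>\<pi> x * g x * ap n (P ^\<^sub>m m) g x\<bar>)"
      unfolding b_def ip_def by (rule sum_abs)
    also have "\<dots> \<le> (\<Sum>x<n. \<pi> x * \<bar>g x\<bar> * (\<Sum>y<n. \<bar>g y\<bar>))"
    proof (rule sum_mono)
      fix x assume x: "x \<in> {..<n}"
      have "\<pi> x > 0" using pd x unfolding prob_dist_def by auto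
      then show "\<bar>\<pi> x * g x * ap n (P ^\<^sub>m m) g x\<bar> \<le> \<pi> x * \<bar>g x\<bar> * (\<Sum>y<n. \<bar>g y\<bar>)"
        using apb[of x] x by (simp add: abs_mult mult_left_mono)
    qed
    also have "\<dots> = B" unfolding B_def by (simp add: sum_distrib_right)
    finally show ?thesis .
  qed
  have lim0: "(\<lambda>N. 2 * (b 1 - b (Suc N)) / real N) \<longlonglongrightarrow> 0"
  proof (rule tendsto_sandwich[of "\<lambda>N. - (4 * B) / real N" _ _ "\<lambda>N. (4 * B) / real N"])
    have "\<bar>2 * (b 1 - b (Suc N))\<bar> \<le> 4 * B" for N using bB[of 1] bB[of "Suc N"] unfolding abs_le_iff by auto
    then have "\<bar>2 * (b 1 - b (Suc N)) / real N\<bar> \<le> 4 * B / real N" for N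
      by (cases "N = 0") (auto simp: divide_right_mono)
    note hh = this
    have h: "- (4 * B) / real N \<le> 2 * (b 1 - b (Suc N)) / real N \<and>
        2 * (b 1 - b (Suc N)) / real N \<le> 4 * B / real N" for N
    proof -
      have "\<bar>2 * (b 1 - b (Suc N)) / real N\<bar> \<le> 4 * B / real N" by (rule hh)
      then show ?thesis unfolding abs_le_iff minus_divide_left by linarith
    qed
    show "\<forall>\<^sub>F N in sequentially. - (4 * B) / real N \<le> 2 * (b 1 - b (Suc N)) / real N"
      "\<forall>\<^sub>F N in sequentially. 2 * (b 1 - b (Suc N)) / real N \<le> 4 * B / real N"
      using h by (auto intro: always_eventually)
    show "(\<lambda>N. - (4 * B) / real N) \<longlonglongrightarrow> 0" "(\<lambda>N. 4 * B / real N) \<longlonglongrightarrow> 0"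
      by (rule lim_const_over_n)+
  qed
  have "(\<lambda>N. C - 2 * (b 1 - b (Suc N)) / real N) \<longlonglongrightarrow> C - 0"
    by (intro tendsto_diff tendsto_const lim0)
  moreover have "\<forall>\<^sub>F N in sequentially. C - 2 * (b 1 - b (Suc N)) / real N = var_sum n \<pi> P f N / real N"
    using eventually_gt_at_top[of "0::nat"]
    by eventually_elim (simp add: closed field_simps)
  ultimately have "(\<lambda>N. var_sum n \<pi> P f N / real N) \<longlonglongrightarrow> C"
    using Lim_transform_eventually by fastforce
  then have av: "asymp_var n \<pi> P f = C" unfolding asymp_var_def by (rule limI)
  have g0: "\<gamma> 0 = ip n \<pi> f f" unfolding \<gamma>_def ip_def using c by (simp add: ap_one)
  have a1: "a 1 = ip n \<pi> f g - ip n \<pi> f f"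
  proof -
    have "ap n (P ^\<^sub>m 1) g x = g x - f x" if "x < n" for x
      using ap_pow_Suc[OF c that, of 0 g] c that fg[OF that] by (simp add: ap_one)
    then show ?thesis unfolding a_def ip_def by (simp add: right_diff_distrib sum_subtractf)
  qed
  show ?thesis using av g0 a1 unfolding C_def by simp
qed



lemma harmonic_const:
  assumes P: "transition_mat n P" and irr: "irreducible_mc n P"
    and h: "\<And>x. x < n \<Longrightarrow> v x = ap n P v x" and n: "n > 0"
  shows "\<exists>c. \<forall>x<n. v x = c"
proof -
  have c: "P \<in> carrier_mat n n" using P unfolding transition_mat_def by auto
  have hk: "x < n \<Longrightarrow> v x = ap n (P ^\<^sub>m k) v x" for k x
  proof (induction k arbitrary: x)
    case 0 then show ?case using c by (simp add: ap_one)
  next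
    case (Suc k)
    have "ap n (P ^\<^sub>m Suc k) v x = ap n (P ^\<^sub>m k) (ap n P v) x" by (rule ap_pow_Suc[OF c Suc.prems])
    also have "\<dots> = ap n (P ^\<^sub>m k) v x" by (intro ap_cong) (simp add: h)
    finally show ?case using Suc by simp
  qed
  define M where "M = Max (v ` {..<n})"
  have "M \<in> v ` {..<n}" unfolding M_def using n by (intro Max_in) auto
  then obtain x0 where x0: "x0 < n" "v x0 = M" by auto
  have le: "v y \<le> M" if "y < n" for y unfolding M_def using that by (intro Max_ge) auto
  have "v y = M" if y: "y < n" for y
  proof -
    obtain k where k: "(P ^\<^sub>m k) $$ (x0, y) > 0" using irr x0 y unfolding irreducible_mc_def by blast
    have Tk: "transition_mat n (P ^\<^sub>m k)" by (rule transition_pow[OF P])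
    have "(\<Sum>z<n. (P ^\<^sub>m k) $$ (x0, z) * (M - v z)) = M * (\<Sum>z<n. (P ^\<^sub>m k) $$ (x0, z)) - ap n (P ^\<^sub>m k) v x0"
      unfolding ap_def by (simp add: left_diff_distrib right_diff_distrib sum_subtractf sum_distrib_left mult_ac)
    also have "\<dots> = 0" using Tk x0 hk[OF x0(1), of k] unfolding transition_mat_def by simp
    finally have s0: "(\<Sum>z<n. (P ^\<^sub>m k) $$ (x0, z) * (M - v z)) = 0" .
    have nn: "\<forall>z\<in>{..<n}. 0 \<le> (P ^\<^sub>m k) $$ (x0, z) * (M - v z)"
      using Tk x0 le unfolding transition_mat_def by auto
    have "(P ^\<^sub>m k) $$ (x0, y) * (M - v y) = 0"
      using sum_nonneg_eq_0_iff[of "{..<n}" "\<lambda>z. (P ^\<^sub>m k) $$ (x0, z) * (M - v z)"] s0 nn y by auto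
    then show ?thesis using k by simp
  qed
  then show ?thesis by blast
qed

lemma mulvec_entry:
  assumes "A \<in> carrier_mat n n" "v \<in> carrier_vec n" "i < n"
  shows "(A *\<^sub>v v) $ i = (\<Sum>j<n. A $$ (i,j) * v $ j)"
  using assms by (simp add: scalar_prod_def atLeast0LessThan)

lemma poisson:
  assumes P: "transition_mat n P" and R: "reversible n \<pi> P" and pd: "prob_dist n \<pi>"
    and irr: "irreducible_mc n P" and mean: "(\<Sum>x<n. \<pi> x * f x) = 0"
  shows "\<exists>g. \<forall>x<n. f x = g x - ap n P g x"
proof -
  have c: "P \<in> carrier_mat n n" using P unfolding transition_mat_def by auto
  have sp: "(\<Sum>x<n. \<pi> x) = 1" using pd unfolding prob_dist_def by auto
  have n: "n > 0" using sp by (cases n) auto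
  define A where "A = mat n n (\<lambda>(i,j). (if i = j then 1 else 0) - P $$ (i,j) + \<pi> j)"
  have Ac: "A \<in> carrier_mat n n" unfolding A_def by simp
  have Av: "(A *\<^sub>v v) $ i = v $ i - ap n P (\<lambda>j. v $ j) i + (\<Sum>j<n. \<pi> j * v $ j)"
    if "v \<in> carrier_vec n" "i < n" for v i
  proof -
    have "(A *\<^sub>v v) $ i = (\<Sum>j<n. ((if i = j then 1 else 0) - P $$ (i,j) + \<pi> j) * v $ j)"
      using mulvec_entry[OF Ac that] that unfolding A_def by simp
    also have "\<dots> = (\<Sum>j<n. (if i = j then v $ j else 0)) - (\<Sum>j<n. P $$ (i,j) * v $ j) + (\<Sum>j<n. \<pi> j * v $ j)"
    proof -
      have "(\<Sum>j<n. ((if i = j then 1 else 0) - P $$ (i,j) + \<pi> j) * v $ j) =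
        (\<Sum>j<n. (if i = j then v $ j else 0) - P $$ (i,j) * v $ j + \<pi> j * v $ j)"
        by (intro sum.cong) (auto simp: algebra_simps)
      then show ?thesis by (simp add: sum.distrib sum_subtractf)
    qed
    also have "\<dots> = v $ i - ap n P (\<lambda>j. v $ j) i + (\<Sum>j<n. \<pi> j * v $ j)"
      using that by (simp add: ap_def)
    finally show ?thesis .
  qed
  have one: "ap n P (\<lambda>_. 1) x = 1" if "x < n" for x
    using P that unfolding transition_mat_def ap_def by simp
  have stat: "(\<Sum>x<n. \<pi> x * ap n P w x) = (\<Sum>x<n. \<pi> x * w x)" for w
  proof -
    have "ip n \<pi> (\<lambda>_. 1) (ap n P w) = ip n \<pi> (ap n P (\<lambda>_. 1)) w" by (rule self_adj[OF R])
    also have "\<dots> = ip n \<pi> (\<lambda>_. 1) w" unfolding ip_def using one by simp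
    finally show ?thesis unfolding ip_def by simp
  qed
  have "det A \<noteq> 0"
  proof
    assume "det A = 0"
    then obtain v where v: "v \<in> carrier_vec n" "v \<noteq> 0\<^sub>v n" "A *\<^sub>v v = 0\<^sub>v n"
      using det_0_iff_vec_prod_zero_field[OF Ac] by blast
    define w where "w j = v $ j" for j
    define s where "s = (\<Sum>j<n. \<pi> j * w j)"
    have eq: "w i - ap n P w i + s = 0" if "i < n" for i
      using Av[OF v(1) that] v(3) that unfolding w_def s_def by simp
    have "(\<Sum>i<n. \<pi> i * (w i - ap n P w i + s)) = 0" using eq by simp
    moreover have "(\<Sum>i<n. \<pi> i * (w i - ap n P w i + s)) = s"
      using stat[of w] sp unfolding s_def
      by (simp add: distrib_left right_diff_distrib sum.distrib sum_subtractf sum_distrib_right[symmetric])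
    ultimately have s0: "s = 0" by simp
    obtain cc where cc: "\<forall>x<n. w x = cc"
      using harmonic_const[OF P irr _ n, of w] eq s0 by fastforce
    have "s = cc" unfolding s_def using cc sp by (simp add: sum_distrib_right[symmetric])
    then have "\<forall>x<n. v $ x = 0" using cc s0 unfolding w_def by simp
    then have "v = 0\<^sub>v n" using v(1) by (intro eq_vecI) auto
    then show False using v(2) by simp
  qed
  from det_non_zero_imp_unit[OF Ac this, of "()"]
  obtain B where B: "B \<in> carrier_mat n n" "A * B = 1\<^sub>m n"
    unfolding Units_def ring_mat_def by auto
  define fv where "fv = vec n f"
  define gv where "gv = B *\<^sub>v fv"
  have gvc: "gv \<in> carrier_vec n" unfolding gv_def fv_def using B by simp
  have "A *\<^sub>v gv = (A * B) *\<^sub>v fv" unfolding gv_def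
    by (rule assoc_mult_mat_vec[symmetric, OF Ac B(1)]) (simp add: fv_def)
  also have "\<dots> = fv" using B unfolding fv_def by simp
  finally have Ag: "A *\<^sub>v gv = fv" .
  define g where "g j = gv $ j" for j
  define s where "s = (\<Sum>j<n. \<pi> j * g j)"
  have eq: "g i - ap n P g i + s = f i" if "i < n" for i
    using Av[OF gvc that] Ag that unfolding g_def s_def fv_def by simp
  have "(\<Sum>i<n. \<pi> i * (g i - ap n P g i + s)) = (\<Sum>i<n. \<pi> i * f i)" using eq by simp
  moreover have "(\<Sum>i<n. \<pi> i * (g i - ap n P g i + s)) = s"
    using stat[of g] sp unfolding s_def
    by (simp add: distrib_left right_diff_distrib sum.distrib sum_subtractf sum_distrib_right[symmetric])
  ultimately have "s = 0" using mean by simp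
  then have "\<forall>x<n. f x = g x - ap n P g x" using eq by auto
  then show ?thesis by blast
qed



lemma qf_single:
  fixes n :: nat and h :: "nat \<Rightarrow> real" and F :: "nat \<Rightarrow> nat \<Rightarrow> real"
  assumes "p < n" "\<And>z. z \<noteq> p \<Longrightarrow> h z = 0"
  shows "(\<Sum>a<n. \<Sum>b<n. F a b * h a * h b) = F p p * h p * h p"
proof -
  have i: "(\<Sum>b<n. F a b * h a * h b) = (\<Sum>b\<in>{p}. F a b * h a * h b)" for a
    by (rule sum.mono_neutral_right) (use assms(1) in \<open>auto simp: assms(2)\<close>)
  have j: "(\<Sum>a<n. F a p * h a * h p) = (\<Sum>a\<in>{p}. F a p * h a * h p)"
    by (rule sum.mono_neutral_right) (use assms(1) in \<open>auto simp: assms(2)\<close>)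
  show ?thesis unfolding i using j by simp
qed

lemma qf_double:
  fixes n :: nat and h :: "nat \<Rightarrow> real" and F :: "nat \<Rightarrow> nat \<Rightarrow> real"
  assumes "p < n" "q < n" "p \<noteq> q" "\<And>z. z \<noteq> p \<Longrightarrow> z \<noteq> q \<Longrightarrow> h z = 0"
  shows "(\<Sum>a<n. \<Sum>b<n. F a b * h a * h b) =
     F p p * h p * h p + F p q * h p * h q + F q p * h q * h p + F q q * h q * h q"
proof -
  have i: "(\<Sum>b<n. F a b * h a * h b) = (\<Sum>b\<in>{p,q}. F a b * h a * h b)" for a
    by (rule sum.mono_neutral_right) (use assms(1,2,3) in \<open>auto simp: assms(4)\<close>)
  have j: "(\<Sum>a<n. \<Sum>b\<in>{p,q}. F a b * h a * h b) = (\<Sum>a\<in>{p,q}. \<Sum>b\<in>{p,q}. F a b * h a * h b)"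
    by (rule sum.mono_neutral_right) (use assms(1,2,3) in \<open>auto simp: assms(4)\<close>)
  show ?thesis unfolding i j using assms(3) by (simp add: algebra_simps)
qed

lemma quad_pos:
  fixes \<pi> :: "nat \<Rightarrow> real" and D :: "nat \<Rightarrow> nat \<Rightarrow> real"
  assumes pos: "\<And>x. x < n \<Longrightarrow> \<pi> x > 0"
    and sym: "\<And>x y. x < n \<Longrightarrow> y < n \<Longrightarrow> \<pi> x * D x y = \<pi> y * D y x"
    and tr: "(\<Sum>x<n. D x x) = 0"
    and nz: "x0 < n" "y0 < n" "D x0 y0 \<noteq> 0"
  shows "\<exists>h. (\<Sum>x<n. \<Sum>y<n. \<pi> x * D x y * h x * h y) > 0"
proof (cases "\<exists>x<n. D x x > 0")
  case True
  then obtain p where p: "p < n" "D p p > 0" by blast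
  define h where "h z = (if z = p then 1 else 0::real)" for z
  have "(\<Sum>x<n. \<Sum>y<n. \<pi> x * D x y * h x * h y) = \<pi> p * D p p * h p * h p"
    by (rule qf_single[OF p(1)]) (simp add: h_def)
  also have "\<dots> > 0" using pos[OF p(1)] p(2) by (simp add: h_def)
  finally show ?thesis by blast
next
  case False
  then have le: "\<forall>x\<in>{..<n}. D x x \<le> 0" by auto
  have d0: "D x x = 0" if "x < n" for x
    using sum_nonneg_eq_0_iff[of "{..<n}" "\<lambda>x. - D x x"] le tr that by (auto simp: sum_negf)
  have ne: "x0 \<noteq> y0" using nz d0 by auto
  define s where "s = sgn (D x0 y0)"
  define h where "h z = (if z = x0 then 1 else if z = y0 then s else 0)" for z
  have "(\<Sum>x<n. \<Sum>y<n. \<pi> x * D x y * h x * h y) =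
     \<pi> x0 * D x0 x0 * h x0 * h x0 + \<pi> x0 * D x0 y0 * h x0 * h y0 + \<pi> y0 * D y0 x0 * h y0 * h x0 + \<pi> y0 * D y0 y0 * h y0 * h y0"
    by (rule qf_double[OF nz(1,2) ne]) (simp add: h_def)
  also have "\<dots> = 2 * \<pi> x0 * (D x0 y0 * s)"
    using d0[OF nz(1)] d0[OF nz(2)] sym[OF nz(1,2)] ne by (simp add: h_def algebra_simps)
  also have "\<dots> > 0" using pos[OF nz(1)] nz(3) unfolding s_def
    by (simp add: abs_sgn[symmetric])
  finally show ?thesis by blast
qed


lemma ip_comm: "ip n \<pi> u v = ip n \<pi> v u"
  unfolding ip_def by (simp add: mult_ac)
lemma ip_diff_right: "ip n \<pi> u (\<lambda>x. a x - b x) = ip n \<pi> u a - ip n \<pi> u b"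
  unfolding ip_def by (simp add: right_diff_distrib sum_subtractf)
lemma ip_diff_left: "ip n \<pi> (\<lambda>x. a x - b x) v = ip n \<pi> a v - ip n \<pi> b v"
  unfolding ip_def by (simp add: left_diff_distrib right_diff_distrib sum_subtractf)
lemma ip_cong_right: "(\<And>x. x < n \<Longrightarrow> v x = w x) \<Longrightarrow> ip n \<pi> u v = ip n \<pi> u w"
  unfolding ip_def by (intro sum.cong) auto

lemma mean_ap:
  assumes P: "transition_mat n P" and R: "reversible n \<pi> P"
  shows "(\<Sum>x<n. \<pi> x * ap n P w x) = (\<Sum>x<n. \<pi> x * w x)"
proof -
  have one: "ap n P (\<lambda>_. 1) x = 1" if "x < n" for x
    using P that unfolding transition_mat_def ap_def by simp
  have "ip n \<pi> (\<lambda>_. 1) (ap n P w) = ip n \<pi> (ap n P (\<lambda>_. 1)) w" by (rule self_adj[OF R])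
  also have "\<dots> = ip n \<pi> (\<lambda>_. 1) w" unfolding ip_def using one by simp
  finally show ?thesis unfolding ip_def by simp
qed

lemma one_dir:
  assumes pd: "prob_dist n \<pi>" and P: "transition_mat n P" and Q: "transition_mat n Q"
    and irr: "irreducible_mc n P" and RP: "reversible n \<pi> P" and RQ: "reversible n \<pi> Q"
    and hpos: "ip n \<pi> h (ap n P h) > ip n \<pi> h (ap n Q h)"
  shows "\<not> efficiency_dominates n \<pi> P Q"
proof -
  define f where "f x = h x - ap n Q h x" for x
  have mean: "(\<Sum>x<n. \<pi> x * f x) = 0"
    unfolding f_def using mean_ap[OF Q RQ, of h] by (simp add: right_diff_distrib sum_subtractf)
  obtain g where g: "\<And>x. x < n \<Longrightarrow> f x = g x - ap n P g x"
    using poisson[OF P RP pd irr mean] by blast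
  have vP: "asymp_var n \<pi> P f = 2 * ip n \<pi> f g - ip n \<pi> f f"
    by (rule var_formula[OF P RP pd g])
  have vQ: "asymp_var n \<pi> Q f = 2 * ip n \<pi> f h - ip n \<pi> f f"
    by (rule var_formula[OF Q RQ pd]) (simp add: f_def)
  define u where "u x = g x - h x" for x
  have d: "ip n \<pi> u (ap n P u) \<le> ip n \<pi> u u" by (rule dirichlet[OF P RP pd])
  have apu: "ap n P u x = (g x - f x) - ap n P h x" if "x < n" for x
  proof -
    have "ap n P u x = ap n P g x - ap n P h x"
      unfolding u_def ap_def by (simp add: right_diff_distrib sum_subtractf)
    then show ?thesis using g[OF that] by simp
  qed
  have d2: "ip n \<pi> u (\<lambda>x. (g x - f x) - ap n P h x) \<le> ip n \<pi> u u"
    using d ip_cong_right[of n "ap n P u" "\<lambda>x. (g x - f x) - ap n P h x" \<pi> u] apu by simp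
  have SA: "ip n \<pi> g (ap n P h) = ip n \<pi> g h - ip n \<pi> f h"
  proof -
    have "ip n \<pi> g (ap n P h) = ip n \<pi> (ap n P g) h" by (rule self_adj[OF RP])
    also have "\<dots> = ip n \<pi> h (\<lambda>x. g x - f x)"
      by (subst ip_comm) (rule ip_cong_right, simp add: g)
    also have "\<dots> = ip n \<pi> g h - ip n \<pi> f h" by (simp add: ip_diff_right ip_comm)
    finally show ?thesis .
  qed
  have fh: "ip n \<pi> h f = ip n \<pi> h h - ip n \<pi> h (ap n Q h)"
    unfolding f_def by (rule ip_diff_right)
  have e1: "ip n \<pi> u (\<lambda>x. (g x - f x) - ap n P h x) =
    ip n \<pi> g g - ip n \<pi> g f - ip n \<pi> g (ap n P h) - ip n \<pi> h g + ip n \<pi> h f + ip n \<pi> h (ap n P h)"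
    unfolding u_def by (simp add: ip_diff_right ip_diff_left)
  have e2: "ip n \<pi> u u = ip n \<pi> g g - ip n \<pi> g h - ip n \<pi> h g + ip n \<pi> h h"
    unfolding u_def by (simp add: ip_diff_right ip_diff_left)
  have c1: "ip n \<pi> g f = ip n \<pi> f g" "ip n \<pi> h g = ip n \<pi> g h" "ip n \<pi> h f = ip n \<pi> f h"
    by (simp_all add: ip_comm)
  have "ip n \<pi> f g - ip n \<pi> f h > 0"
    using d2 e1 e2 SA fh c1 hpos by linarith
  then have "asymp_var n \<pi> P f > asymp_var n \<pi> Q f" using vP vQ by simp
  then show ?thesis unfolding efficiency_dominates_def by (meson not_le)
qed

lemma ip_ap_expand: "ip n \<pi> h (ap n P h) = (\<Sum>x<n. \<Sum>y<n. \<pi> x * P $$ (x,y) * h x * h y)"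
  unfolding ip_def ap_def by (simp add: sum_distrib_left mult_ac)

lemma exists_h:
  assumes pd: "prob_dist n \<pi>" and P: "transition_mat n P" and Q: "transition_mat n Q"
    and RP: "reversible n \<pi> P" and RQ: "reversible n \<pi> Q"
    and tr: "(\<Sum>i<n. P $$ (i,i)) = (\<Sum>i<n. Q $$ (i,i))"
    and ne: "i < n" "j < n" "P $$ (i,j) \<noteq> Q $$ (i,j)"
  shows "\<exists>h. ip n \<pi> h (ap n P h) > ip n \<pi> h (ap n Q h)"
proof -
  define D where "D x y = P $$ (x,y) - Q $$ (x,y)" for x y
  have "\<exists>h. (\<Sum>x<n. \<Sum>y<n. \<pi> x * D x y * h x * h y) > 0"
  proof (rule quad_pos[of n \<pi> D i j])
    show "\<pi> x > 0" if "x < n" for x using pd that unfolding prob_dist_def by auto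
    show "\<pi> x * D x y = \<pi> y * D y x" if "x < n" "y < n" for x y
      using RP RQ that unfolding reversible_def D_def by (simp add: right_diff_distrib)
    show "(\<Sum>x<n. D x x) = 0" unfolding D_def using tr by (simp add: sum_subtractf)
  qed (use ne D_def in auto)
  then obtain h where h: "(\<Sum>x<n. \<Sum>y<n. \<pi> x * D x y * h x * h y) > 0" by blast
  have "(\<Sum>x<n. \<Sum>y<n. \<pi> x * D x y * h x * h y) = ip n \<pi> h (ap n P h) - ip n \<pi> h (ap n Q h)"
    unfolding ip_ap_expand D_def by (simp add: algebra_simps sum_subtractf)
  then show ?thesis using h by auto
qed

theorem corollary2:
  fixes n :: nat and \<pi> :: "nat \<Rightarrow> real" and P Q :: "real mat"
  assumes "prob_dist n \<pi>"
    and "transition_mat n P" and "transition_mat n Q"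
    and "irreducible_mc n P" and "irreducible_mc n Q"
    and "reversible n \<pi> P" and "reversible n \<pi> Q"
    and "char_poly P = char_poly Q"
    and "P \<noteq> Q"
  shows "\<not> efficiency_dominates n \<pi> P Q \<and> \<not> efficiency_dominates n \<pi> Q P"
proof -
  note pd = assms(1) and TP = assms(2) and TQ = assms(3) and IP = assms(4) and IQ = assms(5)
    and RP = assms(6) and RQ = assms(7)
  have cP: "P \<in> carrier_mat n n" and cQ: "Q \<in> carrier_mat n n"
    using TP TQ unfolding transition_mat_def by auto
  have sp: "(\<Sum>x<n. \<pi> x) = 1" using pd unfolding prob_dist_def by auto
  have n: "n > 0" using sp by (cases n) auto
  have tr: "(\<Sum>i<n. P $$ (i,i)) = (\<Sum>i<n. Q $$ (i,i))"
    using coeff_char_poly_trace[OF cP n] coeff_char_poly_trace[OF cQ n] assms(8) by simp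
  obtain i j where ij: "i < n" "j < n" "P $$ (i,j) \<noteq> Q $$ (i,j)"
    using assms(9) cP cQ by (metis carrier_matD eq_matI)
  obtain h1 where h1: "ip n \<pi> h1 (ap n P h1) > ip n \<pi> h1 (ap n Q h1)"
    using exists_h[OF pd TP TQ RP RQ tr ij] by blast
  obtain h2 where h2: "ip n \<pi> h2 (ap n Q h2) > ip n \<pi> h2 (ap n P h2)"
    using exists_h[OF pd TQ TP RQ RP tr[symmetric] ij(1,2)] ij(3) by (metis)
  show ?thesis
    using one_dir[OF pd TP TQ IP RP RQ h1] one_dir[OF pd TQ TP IQ RQ RP h2] by blast
qed


end
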